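(* Let $X$ be a nonempty set and let $g,g_1\in\Gamma(X)$ with $g$ of height at least $2$. Writing $u\approx v$ for $[u]=[v]$ in $FT^1(X)$: (i) $g\approx g^cg\approx gg^c\approx gg^lg\approx gg^rg$ and $g^rgg^l\approx g^rg^cg^l$; (ii) $[gg^r],[gg^l],[g^rg],[g^lg]$ are idempotents of $FT(X)$; (iii) $[g^lg]\,\mathcal L\,[g^rg]\,\mathcal L\,[g]\,\mathcal R\,[gg^r]\,\mathcal R\,[gg^l]$ in $FT(X)$; (iv) $[g]\in S([g^rg^c],[g^cg^l])$; (v) $g_1\approx\beta_1(g_1)$.
   Context: Let $1$ be a symbol not in $X$. Elements of height $\ge 2$ are triples $g=(g^l,g^c,g^r)$; $\Gamma_0(X)=\{1\}$, $\Gamma_1(X)=X$, each $x\in X$ identified with $(1,x,1)$ (so $x^l=x^r=1$, $x^c=x$); for $i\ge 2$, $\Gamma_i(X)$ is the set of triples $g\in\Gamma_{i-1}(X)\times\Gamma_{i-2}(X)\times\Gamma_{i-1}(X)$ with $g^l\neq g^r$ and $g^c\in\{(g^l)^l,(g^l)^r\}\cap\{(g^r)^l,(g^r)^r\}$; $\Gamma(X)=\bigcup_{i\ge0}\Gamma_i(X)$, height of $g$ = the $i$ with $g\in\Gamma_i(X)$. Let $\rho$ be the smallest congruence on $\Gamma(X)^+$ containing $(1g,g),(g1,g),(gg,g)$ for all $g\in\Gamma(X)$ and $(g^cg^lg,g)$, $(gg^rg^c,g)$, $(g^rg^cgg^cg^l,g^rg^cg^l)$ for all $g$ of height $\ge2$.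 $FT^1(X)=\Gamma(X)^+/\rho$, $[u]$ the class of $u$, $FT(X)=FT^1(X)\setminus\{[1]\}$. For a word $w=x_1\cdots x_m$ over $\{l,c,r\}$, $g^{w}=(\cdots((g^{x_1})^{x_2})\cdots)^{x_m}$, e.g. $g^{c^{k}l}=((g^c)^{\cdots c})^l$ with $k$ letters $c$; $g^{c^0}=g$. For $g\neq1$: if $g$ has height $2n$, $\beta_1(g)=g^{c^n}g^{c^{n-1}l}g^{c^{n-1}}\cdots g^cg^lgg^rg^c\cdots g^{c^{n-1}}g^{c^{n-1}r}g^{c^n}$; if $g$ has height $2n+1$, $\beta_1(g)=1\,g^{c^n}g^{c^{n-1}l}g^{c^{n-1}}\cdots g^cg^lgg^rg^c\cdots g^{c^{n-1}}g^{c^{n-1}r}g^{c^n}\,1$; and $\beta_1(1)=1$. $S(e,f)=\{h\in E: fh=h=he,\ ehf=ef\}$ is the sandwich set of idempotents $e,f$; $\mathcal L,\mathcal R$ are Green's relations. *)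

theory Defs
  imports Main
begin

(* Elements of Gamma(X): the symbol 1 (One), letters x (identified with (1,x,1)), and triples. *)
datatype 'a gam = One | Leaf 'a | Node "'a gam" "'a gam" "'a gam"

(* projections g^l, g^c, g^r; for a letter x = (1,x,1): x^l = x^r = 1, x^c = x.
   For 1 they are never used by the statement (set to 1). *)
fun lp :: "'a gam \<Rightarrow> 'a gam" where
  "lp One = One" | "lp (Leaf x) = One" | "lp (Node l c r) = l"
fun cp :: "'a gam \<Rightarrow> 'a gam" where
  "cp One = One" | "cp (Leaf x) = Leaf x" | "cp (Node l c r) = c"
fun rp :: "'a gam \<Rightarrow> 'a gam" where
  "rp One = One" | "rp (Leaf x) = One" | "rp (Node l c r) = r"

fun Gamma :: "'a set \<Rightarrow> nat \<Rightarrow> 'a gam set" where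
  "Gamma X 0 = {One}"
| "Gamma X (Suc 0) = Leaf ` X"
| "Gamma X (Suc (Suc i)) =
     {Node l c r | l c r. l \<in> Gamma X (Suc i) \<and> c \<in> Gamma X i \<and> r \<in> Gamma X (Suc i)
        \<and> l \<noteq> r \<and> c \<in> {lp l, rp l} \<inter> {lp r, rp r}}"

definition GammaAll :: "'a set \<Rightarrow> 'a gam set" where
  "GammaAll X = (\<Union>i. Gamma X i)"

definition height :: "'a set \<Rightarrow> 'a gam \<Rightarrow> nat" where
  "height X g = (THE i. g \<in> Gamma X i)"

definition words :: "'a set \<Rightarrow> 'a gam list set" where
  "words X = {u. u \<noteq> [] \<and> set u \<subseteq> GammaAll X}"

inductive rho :: "'a set \<Rightarrow> 'a gam list \<Rightarrow> 'a gam list \<Rightarrow> bool" for X where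
  gen1: "g \<in> GammaAll X \<Longrightarrow> rho X [One, g] [g]"
| gen2: "g \<in> GammaAll X \<Longrightarrow> rho X [g, One] [g]"
| gen3: "g \<in> GammaAll X \<Longrightarrow> rho X [g, g] [g]"
| gen4: "g \<in> Gamma X i \<Longrightarrow> 2 \<le> i \<Longrightarrow> rho X [cp g, lp g, g] [g]"
| gen5: "g \<in> Gamma X i \<Longrightarrow> 2 \<le> i \<Longrightarrow> rho X [g, rp g, cp g] [g]"
| gen6: "g \<in> Gamma X i \<Longrightarrow> 2 \<le> i \<Longrightarrow>
          rho X [rp g, cp g, g, cp g, lp g] [rp g, cp g, lp g]"
| refl: "u \<in> words X \<Longrightarrow> rho X u u"
| sym: "rho X u v \<Longrightarrow> rho X v u"
| trans: "rho X u v \<Longrightarrow> rho X v w \<Longrightarrow> rho X u w"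
| compat: "rho X u v \<Longrightarrow> set p \<subseteq> GammaAll X \<Longrightarrow> set q \<subseteq> GammaAll X \<Longrightarrow>
             rho X (p @ u @ q) (p @ v @ q)"

definition cls :: "'a set \<Rightarrow> 'a gam list \<Rightarrow> 'a gam list set" where
  "cls X u = {v. rho X u v}"

definition FT1 :: "'a set \<Rightarrow> 'a gam list set set" where
  "FT1 X = cls X ` words X"

definition FT :: "'a set \<Rightarrow> 'a gam list set set" where
  "FT X = FT1 X - {cls X [One]}"

definition clmul :: "'a set \<Rightarrow> 'a gam list set \<Rightarrow> 'a gam list set \<Rightarrow> 'a gam list set" where
  "clmul X A B = {w. \<exists>u\<in>A. \<exists>v\<in>B. rho X (u @ v) w}"

definition idem :: "'a set \<Rightarrow> 'a gam list set set" where
  "idem X = {e \<in> FT X. clmul X e e = e}"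

(* Green's relations L and R in the semigroup FT(X) (via FT(X)^1) *)
definition greenL :: "'a set \<Rightarrow> 'a gam list set \<Rightarrow> 'a gam list set \<Rightarrow> bool" where
  "greenL X a b \<longleftrightarrow> a \<in> FT X \<and> b \<in> FT X \<and>
     (a = b \<or> (\<exists>s\<in>FT X. clmul X s b = a)) \<and> (b = a \<or> (\<exists>t\<in>FT X. clmul X t a = b))"

definition greenR :: "'a set \<Rightarrow> 'a gam list set \<Rightarrow> 'a gam list set \<Rightarrow> bool" where
  "greenR X a b \<longleftrightarrow> a \<in> FT X \<and> b \<in> FT X \<and>
     (a = b \<or> (\<exists>s\<in>FT X. clmul X b s = a)) \<and> (b = a \<or> (\<exists>t\<in>FT X. clmul X a t = b))"

definition sandwich :: "'a set \<Rightarrow> 'a gam list set \<Rightarrow> 'a gam list set \<Rightarrow> 'a gam list set set" where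
  "sandwich X e f = {h \<in> idem X. clmul X f h = h \<and> h = clmul X h e \<and>
                      clmul X (clmul X e h) f = clmul X e f}"

definition cpow :: "'a gam \<Rightarrow> nat \<Rightarrow> 'a gam" where
  "cpow g k = (cp ^^ k) g"

definition beta1 :: "'a set \<Rightarrow> 'a gam \<Rightarrow> 'a gam list" where
  "beta1 X g =
    (let h = height X g; n = h div 2;
         core = concat (map (\<lambda>k. [cpow g (Suc k), lp (cpow g k)]) (rev [0..<n])) @ [g]
                @ concat (map (\<lambda>k. [rp (cpow g k), cpow g (Suc k)]) [0..<n])
     in if g = One then [One] else if even h then core else One # core @ [One])"

end

theory Submission
  imports Defs
begin


lemma Gamma_GA: "x \<in> Gamma X i \<Longrightarrow> x \<in> GammaAll X"
  unfolding GammaAll_def by blast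

lemma Gamma_ge2:
  assumes "g \<in> Gamma X i" "2 \<le> i"
  shows "\<exists>k. i = Suc (Suc k) \<and> lp g \<in> Gamma X (Suc k) \<and> cp g \<in> Gamma X k
          \<and> rp g \<in> Gamma X (Suc k)"
proof -
  obtain k where k: "i = Suc (Suc k)" using assms(2) by (metis add_2_eq_Suc le_Suc_ex)
  show ?thesis using assms(1) unfolding k by auto
qed

lemma Gamma_cases3: "(x \<in> Gamma X i) = ((i = 0 \<and> x = One) \<or> (i = 1 \<and> x \<in> Leaf ` X)
   \<or> (\<exists>k. i = Suc (Suc k) \<and> x \<in> Gamma X (Suc (Suc k))))"
  by (cases i; cases "i - 1") auto

lemma Gamma_notOne: "x \<in> Gamma X i \<Longrightarrow> 1 \<le> i \<Longrightarrow> x \<noteq> One"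
  by (subst (asm) Gamma_cases3) auto

lemma Gamma_One: "One \<in> Gamma X i \<Longrightarrow> i = 0"
  by (subst (asm) Gamma_cases3) auto

lemma Gamma_Leaf: "Leaf a \<in> Gamma X i \<Longrightarrow> i = 1"
  by (subst (asm) Gamma_cases3) auto

lemma Gamma_Node: "Node l c r \<in> Gamma X i \<Longrightarrow> \<exists>k. i = Suc (Suc k) \<and> l \<in> Gamma X (Suc k)"
  by (subst (asm) Gamma_cases3) auto

lemma Gamma_unique: "x \<in> Gamma X i \<Longrightarrow> x \<in> Gamma X j \<Longrightarrow> i = j"
proof (induction x arbitrary: i j)
  case One
  then show ?case using Gamma_One by metis
next
  case (Leaf a)
  then show ?case using Gamma_Leaf by metis
next
  case (Node l c r)
  then obtain a b where "i = Suc (Suc a)" "l \<in> Gamma X (Suc a)" "j = Suc (Suc b)" "l \<in> Gamma X (Suc b)"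
    using Gamma_Node by metis
  then show ?case using Node.IH(1) by fastforce
qed

lemma height_eq: "g \<in> Gamma X i \<Longrightarrow> height X g = i"
  unfolding height_def using Gamma_unique by blast

lemma One_GA: "One \<in> GammaAll X"
  using Gamma_GA[of One X 0] by simp

lemma ge2_GA: "g \<in> Gamma X i \<Longrightarrow> 2 \<le> i \<Longrightarrow>
   g \<in> GammaAll X \<and> lp g \<in> GammaAll X \<and> cp g \<in> GammaAll X \<and> rp g \<in> GammaAll X
   \<and> g \<noteq> One \<and> rp g \<noteq> One \<and> lp g \<noteq> One"
proof -
  assume a: "g \<in> Gamma X i" "2 \<le> i"
  then obtain k where k: "i = Suc (Suc k)" "lp g \<in> Gamma X (Suc k)" "cp g \<in> Gamma X k"
          "rp g \<in> Gamma X (Suc k)" using Gamma_ge2 by blast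
  have "g \<noteq> One" using Gamma_notOne[OF a(1)] a(2) by simp
  moreover have "rp g \<noteq> One" "lp g \<noteq> One" using Gamma_notOne[OF k(4)] Gamma_notOne[OF k(2)] by auto
  ultimately show ?thesis using a k Gamma_GA by blast
qed

lemma rho_words: "rho X u v \<Longrightarrow> u \<in> words X \<and> v \<in> words X"
proof (induction rule: rho.induct)
  case (gen4 g i)
  then show ?case using ge2_GA[OF gen4] unfolding words_def by simp
next
  case (gen5 g i)
  then show ?case using ge2_GA[OF gen5] unfolding words_def by simp
next
  case (gen6 g i)
  then show ?case using ge2_GA[OF gen6] unfolding words_def by simp
next
  case (gen1 g) then show ?case using One_GA by (simp add: words_def)
next
  case (gen2 g) then show ?case using One_GA by (simp add: words_def)
next
  case (gen3 g) then show ?case by (simp add: words_def)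
next
  case (compat u v p q) then show ?case by (simp add: words_def)
next
  case (refl u) then show ?case by simp
next
  case (sym u v) then show ?case by simp
next
  case (trans u v w) then show ?case by simp
qed

lemma rho_nonOne: "rho X u v \<Longrightarrow> (\<exists>x\<in>set u. x \<noteq> One) \<longleftrightarrow> (\<exists>x\<in>set v. x \<noteq> One)"
proof (induction rule: rho.induct)
  case (gen4 g i)
  then show ?case using ge2_GA[OF gen4] by auto
next
  case (gen5 g i)
  then show ?case using ge2_GA[OF gen5] by auto
next
  case (gen6 g i)
  then show ?case using ge2_GA[OF gen6] by auto
next
  case (gen1 g) then show ?case by simp
next
  case (gen2 g) then show ?case by simp
next
  case (gen3 g) then show ?case by simp
next
  case (compat u v p q) then show ?case by auto
next
  case (refl u) then show ?case by simp
next
  case (sym u v) then show ?case by simp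
next
  case (trans u v w) then show ?case by simp
qed

lemma ctx: "rho X u v \<Longrightarrow> set p \<subseteq> GammaAll X \<Longrightarrow> set q \<subseteq> GammaAll X \<Longrightarrow>
   x = p @ u @ q \<Longrightarrow> y = p @ v @ q \<Longrightarrow> rho X x y"
  using rho.compat by blast

lemma cls_eq: "rho X u v \<Longrightarrow> cls X u = cls X v"
  unfolding cls_def using rho.sym rho.trans by blast

lemma clmul_cls:
  assumes "u \<in> words X" "v \<in> words X"
  shows "clmul X (cls X u) (cls X v) = cls X (u @ v)"
proof
  show "clmul X (cls X u) (cls X v) \<subseteq> cls X (u @ v)"
  proof
    fix w assume "w \<in> clmul X (cls X u) (cls X v)"
    then obtain u' v' where h: "rho X u u'" "rho X v v'" "rho X (u' @ v') w"
      unfolding clmul_def cls_def by auto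
    have a: "rho X (u @ v) (u' @ v)"
      by (rule ctx[OF h(1), of "[]" v]) (use assms in \<open>auto simp: words_def\<close>)
    have b: "rho X (u' @ v) (u' @ v')"
      by (rule ctx[OF h(2), of u' "[]"]) (use rho_words[OF h(1)] in \<open>auto simp: words_def\<close>)
    show "w \<in> cls X (u @ v)" unfolding cls_def
      using rho.trans[OF rho.trans[OF a b] h(3)] by simp
  qed
next
  show "cls X (u @ v) \<subseteq> clmul X (cls X u) (cls X v)"
    unfolding clmul_def cls_def using assms rho.refl by blast
qed

lemma inFT:
  assumes "u \<in> words X" "\<exists>x\<in>set u. x \<noteq> One"
  shows "cls X u \<in> FT X"
proof -
  have "cls X u \<noteq> cls X [One]"
  proof
    assume "cls X u = cls X [One]"
    moreover have "u \<in> cls X u" using assms(1) rho.refl unfolding cls_def by blast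
    ultimately have "rho X [One] u" unfolding cls_def by blast
    then show False using rho_nonOne assms(2) by fastforce
  qed
  then show ?thesis using assms unfolding FT_def FT1_def by blast
qed



lemma alg:
  assumes g: "g \<in> Gamma X i" "2 \<le> i"
  defines "l \<equiv> lp g" and "c \<equiv> cp g" and "r \<equiv> rp g"
  shows "rho X [g] [cp g, g] \<and> rho X [g] [g, cp g] \<and> rho X [g] [g, lp g, g]
        \<and> rho X [g] [g, rp g, g] \<and> rho X [rp g, g, lp g] [rp g, cp g, lp g]"
proof -
  obtain k where k: "l \<in> Gamma X (Suc k)" "c \<in> Gamma X k" "r \<in> Gamma X (Suc k)"
    using Gamma_ge2[OF g] unfolding l_def c_def r_def by blast
  have GA: "g \<in> GammaAll X" "l \<in> GammaAll X" "c \<in> GammaAll X" "r \<in> GammaAll X"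
    using k g Gamma_GA by blast+
  have w: "\<And>u. u \<noteq> [] \<Longrightarrow> set u \<subseteq> {g,l,c,r} \<Longrightarrow> u \<in> words X"
    unfolding words_def using GA by blast
  have e4: "rho X [c,l,g] [g]" using rho.gen4[OF g] unfolding l_def c_def .
  have e5: "rho X [g,r,c] [g]" using rho.gen5[OF g] unfolding r_def c_def .
  have e6: "rho X [r,c,g,c,l] [r,c,l]" using rho.gen6[OF g] unfolding l_def c_def r_def .
  have cc: "rho X [c,c] [c]" using rho.gen3[OF GA(3)] .
  have gg: "rho X [g,g] [g]" using rho.gen3[OF GA(1)] .
  note S = rho.sym and T = rho.trans
  have a1: "rho X [c,g] [g]"
  proof -
    have "rho X [c,g] [c,c,l,g]" by (rule ctx[OF S[OF e4], of "[c]" "[]"]) (use GA in auto)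
    moreover have "rho X [c,c,l,g] [c,l,g]" by (rule ctx[OF cc, of "[]" "[l,g]"]) (use GA in auto)
    ultimately show ?thesis using e4 T by blast
  qed
  have a2: "rho X [g,c] [g]"
  proof -
    have "rho X [g,c] [g,r,c,c]" by (rule ctx[OF S[OF e5], of "[]" "[c]"]) (use GA in auto)
    moreover have "rho X [g,r,c,c] [g,r,c]" by (rule ctx[OF cc, of "[g,r]" "[]"]) (use GA in auto)
    ultimately show ?thesis using e5 T by blast
  qed
  have W: "rho X [g,r,c,l,g] [g]"
  proof -
    have "rho X [g,r,c,l,g] [g,r,c,c,l,g]" by (rule ctx[OF S[OF cc], of "[g,r]" "[l,g]"]) (use GA in auto)
    moreover have "rho X [g,r,c,c,l,g] [g,c,l,g]" by (rule ctx[OF e5, of "[]" "[c,l,g]"]) (use GA in auto)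
    moreover have "rho X [g,c,l,g] [g,g]" by (rule ctx[OF e4, of "[g]" "[]"]) (use GA in auto)
    ultimately show ?thesis using gg T by blast
  qed
  have a3: "rho X [g,l,g] [g]"
  proof -
    have "rho X [g,l,g] [g,r,c,l,g]" by (rule ctx[OF S[OF e5], of "[]" "[l,g]"]) (use GA in auto)
    then show ?thesis using W T by blast
  qed
  have a4: "rho X [g,r,g] [g]"
  proof -
    have "rho X [g,r,g] [g,r,c,l,g]" by (rule ctx[OF S[OF e4], of "[g,r]" "[]"]) (use GA in auto)
    then show ?thesis using W T by blast
  qed
  have a5: "rho X [r,g,l] [r,c,l]"
  proof -
    have "rho X [r,g,l] [r,c,g,l]" by (rule ctx[OF S[OF a1], of "[r]" "[l]"]) (use GA in auto)
    moreover have "rho X [r,c,g,l] [r,c,g,c,l]" by (rule ctx[OF S[OF a2], of "[r,c]" "[l]"]) (use GA in auto)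
    ultimately show ?thesis using e6 T by blast
  qed
  show ?thesis using a1 a2 a3 a4 a5 S unfolding l_def c_def r_def by blast
qed



lemma partB:
  assumes g: "g \<in> Gamma X i" "2 \<le> i"
  shows "(cls X [g, rp g] \<in> idem X \<and> cls X [g, lp g] \<in> idem X
        \<and> cls X [rp g, g] \<in> idem X \<and> cls X [lp g, g] \<in> idem X)
   \<and> (greenL X (cls X [lp g, g]) (cls X [rp g, g]) \<and> greenL X (cls X [rp g, g]) (cls X [g])
        \<and> greenR X (cls X [g]) (cls X [g, rp g]) \<and> greenR X (cls X [g, rp g]) (cls X [g, lp g]))
   \<and> cls X [g] \<in> sandwich X (cls X [rp g, cp g]) (cls X [cp g, lp g])"
proof -
  define l where "l = lp g"
  define c where "c = cp g"
  define r where "r = rp g"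
  obtain k where k: "l \<in> Gamma X (Suc k)" "c \<in> Gamma X k" "r \<in> Gamma X (Suc k)"
    using Gamma_ge2[OF g] unfolding l_def c_def r_def by blast
  have GA: "g \<in> GammaAll X" "l \<in> GammaAll X" "c \<in> GammaAll X" "r \<in> GammaAll X"
    using k g Gamma_GA by blast+
  have nO: "g \<noteq> One" "r \<noteq> One" "l \<noteq> One" using ge2_GA[OF g] unfolding l_def r_def by simp_all
  have w: "\<And>u. u \<noteq> [] \<Longrightarrow> set u \<subseteq> {g,l,c,r} \<Longrightarrow> u \<in> words X"
    unfolding words_def using GA by blast
  have A: "rho X [g] [c, g]" "rho X [g] [g, c]" "rho X [g] [g, l, g]"
        "rho X [g] [g, r, g]" "rho X [r, g, l] [r, c, l]"
    using alg[OF g] unfolding l_def c_def r_def by blast+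
  have e4: "rho X [c,l,g] [g]" using rho.gen4[OF g] unfolding l_def c_def .
  have e5: "rho X [g,r,c] [g]" using rho.gen5[OF g] unfolding r_def c_def .
  have e6: "rho X [r,c,g,c,l] [r,c,l]" using rho.gen6[OF g] unfolding l_def c_def r_def .
  have gg: "rho X [g,g] [g]" using rho.gen3[OF GA(1)] .
  note S = rho.sym
  have M: "\<And>u v. u \<noteq> [] \<Longrightarrow> set u \<subseteq> {g,l,c,r} \<Longrightarrow> v \<noteq> [] \<Longrightarrow> set v \<subseteq> {g,l,c,r} \<Longrightarrow>
     clmul X (cls X u) (cls X v) = cls X (u @ v)"
    using clmul_cls w by blast
  have F: "\<And>u. u \<noteq> [] \<Longrightarrow> set u \<subseteq> {g,l,c,r} \<Longrightarrow> g \<in> set u \<or> r \<in> set u \<or> l \<in> set u \<Longrightarrow>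
     cls X u \<in> FT X"
  proof -
    fix u :: "'a gam list"
    assume a: "u \<noteq> []" "set u \<subseteq> {g,l,c,r}" "g \<in> set u \<or> r \<in> set u \<or> l \<in> set u"
    then have "\<exists>x\<in>set u. x \<noteq> One" using nO by blast
    then show "cls X u \<in> FT X" using inFT w[OF a(1,2)] by blast
  qed
  have r1: "cls X [g,r,g,r] = cls X [g,r]"
    by (rule cls_eq, rule ctx[OF S[OF A(4)], of "[]" "[r]"]) (use GA in auto)
  have r2: "cls X [g,l,g,l] = cls X [g,l]"
    by (rule cls_eq, rule ctx[OF S[OF A(3)], of "[]" "[l]"]) (use GA in auto)
  have r3: "cls X [r,g,r,g] = cls X [r,g]"
    by (rule cls_eq, rule ctx[OF S[OF A(4)], of "[r]" "[]"]) (use GA in auto)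
  have r4: "cls X [l,g,l,g] = cls X [l,g]"
    by (rule cls_eq, rule ctx[OF S[OF A(3)], of "[l]" "[]"]) (use GA in auto)
  have r5: "cls X [l,g,r,g] = cls X [l,g]"
    by (rule cls_eq, rule ctx[OF S[OF A(4)], of "[l]" "[]"]) (use GA in auto)
  have r6: "cls X [r,g,l,g] = cls X [r,g]"
    by (rule cls_eq, rule ctx[OF S[OF A(3)], of "[r]" "[]"]) (use GA in auto)
  have r7: "cls X [g,r,g] = cls X [g]"
    by (rule cls_eq, rule S[OF A(4)])
  have r8: "cls X [g,l,g,r] = cls X [g,r]"
    by (rule cls_eq, rule ctx[OF S[OF A(3)], of "[]" "[r]"]) (use GA in auto)
  have r9: "cls X [g,r,g,l] = cls X [g,l]"
    by (rule cls_eq, rule ctx[OF S[OF A(4)], of "[]" "[l]"]) (use GA in auto)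
  have r10: "cls X [g,g] = cls X [g]" by (rule cls_eq[OF gg])
  have r11: "cls X [c,l,g] = cls X [g]" by (rule cls_eq[OF e4])
  have r12: "cls X [g,r,c] = cls X [g]" by (rule cls_eq[OF e5])
  have r13: "cls X [r,c,g,c,l] = cls X [r,c,l]" by (rule cls_eq[OF e6])
  have FT: "cls X [g] \<in> FT X" "cls X [r] \<in> FT X" "cls X [l,g] \<in> FT X" "cls X [r,g] \<in> FT X"
     "cls X [g,r] \<in> FT X" "cls X [g,l] \<in> FT X"
    using F[of "[g]"] F[of "[r]"] F[of "[l,g]"] F[of "[r,g]"] F[of "[g,r]"] F[of "[g,l]"] by simp_all
  have I: "cls X [g, r] \<in> idem X \<and> cls X [g, l] \<in> idem X
        \<and> cls X [r, g] \<in> idem X \<and> cls X [l, g] \<in> idem X"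
    unfolding idem_def using FT M[of "[g,r]" "[g,r]"] M[of "[g,l]" "[g,l]"] M[of "[r,g]" "[r,g]"]
       M[of "[l,g]" "[l,g]"] r1 r2 r3 r4 by simp
  have G1: "greenL X (cls X [l, g]) (cls X [r, g])"
    unfolding greenL_def using FT M[of "[l,g]" "[r,g]"] M[of "[r,g]" "[l,g]"] r5 r6 by auto
  have G2: "greenL X (cls X [r, g]) (cls X [g])"
    unfolding greenL_def using FT M[of "[r]" "[g]"] M[of "[g]" "[r,g]"] r7 by auto
  have G3: "greenR X (cls X [g]) (cls X [g, r])"
    unfolding greenR_def using FT M[of "[g,r]" "[g]"] M[of "[g]" "[r]"] r7 by auto
  have G4: "greenR X (cls X [g, r]) (cls X [g, l])"
    unfolding greenR_def using FT M[of "[g,l]" "[g,r]"] M[of "[g,r]" "[g,l]"] r8 r9 by auto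
  have r14: "cls X [r,c,c,l] = cls X [r,c,l]"
    by (rule cls_eq, rule ctx[OF rho.gen3[OF GA(3)], of "[r]" "[l]"]) (use GA in auto)
  have m1: "clmul X (cls X [g]) (cls X [g]) = cls X [g]" using M[of "[g]" "[g]"] r10 by simp
  have m2: "clmul X (cls X [c,l]) (cls X [g]) = cls X [g]" using M[of "[c,l]" "[g]"] r11 by simp
  have m3: "clmul X (cls X [g]) (cls X [r,c]) = cls X [g]" using M[of "[g]" "[r,c]"] r12 by simp
  have m4: "clmul X (clmul X (cls X [r,c]) (cls X [g])) (cls X [c,l]) = clmul X (cls X [r,c]) (cls X [c,l])"
    using M[of "[r,c]" "[g]"] M[of "[r,c,g]" "[c,l]"] M[of "[r,c]" "[c,l]"] r13 r14 by simp
  have SW: "cls X [g] \<in> sandwich X (cls X [r, c]) (cls X [c, l])"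
    unfolding sandwich_def idem_def using FT(1) m1 m2 m3 m4 by simp
  show ?thesis using I G1 G2 G3 G4 SW unfolding l_def c_def r_def by blast
qed



definition core :: "'a gam \<Rightarrow> nat \<Rightarrow> 'a gam list" where
  "core g n = concat (map (\<lambda>k. [cpow g (Suc k), lp (cpow g k)]) (rev [0..<n])) @ [g]
                @ concat (map (\<lambda>k. [rp (cpow g k), cpow g (Suc k)]) [0..<n])"

lemma core_Suc: "core g (Suc n) = [cpow g (Suc n), lp (cpow g n)] @ core g n @ [rp (cpow g n), cpow g (Suc n)]"
  unfolding core_def by simp

lemma core_0: "core g 0 = [g]" unfolding core_def by simp

lemma core_hd: "\<exists>v. core g n = cpow g n # v"
  by (cases n) (auto simp: core_Suc core_0 cpow_def)

lemma core_last: "\<exists>v. core g n = v @ [cpow g n]"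
  by (cases n) (auto simp: core_Suc core_0 cpow_def)

lemma cpow_Gamma: "g \<in> Gamma X h \<Longrightarrow> 2 * n \<le> h \<Longrightarrow> cpow g n \<in> Gamma X (h - 2 * n)"
proof (induction n)
  case 0 then show ?case by (simp add: cpow_def)
next
  case (Suc n)
  then have a: "cpow g n \<in> Gamma X (h - 2 * n)" "2 \<le> h - 2 * n" by auto
  obtain k where "h - 2 * n = Suc (Suc k)" "cp (cpow g n) \<in> Gamma X k"
    using Gamma_ge2[OF a] by blast
  moreover have "cpow g (Suc n) = cp (cpow g n)" by (simp add: cpow_def)
  moreover have "h - 2 * Suc n = k" using calculation(1) by simp
  ultimately show ?case by simp
qed

lemma core_rho: "g \<in> Gamma X h \<Longrightarrow> 2 * n \<le> h \<Longrightarrow> rho X (core g n) [g]"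
proof (induction n)
  case 0
  have "[g] \<in> words X" using Gamma_GA[OF 0(1)] by (simp add: words_def)
  then show ?case using rho.refl by (simp add: core_0)
next
  case (Suc n)
  then have IH: "rho X (core g n) [g]" by auto
  have a: "cpow g n \<in> Gamma X (h - 2 * n)" "2 \<le> h - 2 * n"
    using Suc.prems cpow_Gamma[OF Suc.prems(1), of n] by auto
  obtain k where k: "lp (cpow g n) \<in> Gamma X (Suc k)" "cp (cpow g n) \<in> Gamma X k" "rp (cpow g n) \<in> Gamma X (Suc k)"
    using Gamma_ge2[OF a] by blast
  have cs: "cpow g (Suc n) = cp (cpow g n)" by (simp add: cpow_def)
  have w: "set (core g n) \<subseteq> GammaAll X" using rho_words[OF IH] by (simp add: words_def)
  obtain v where v: "core g n = cpow g n # v" using core_hd by blast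
  obtain v' where v': "core g n = v' @ [cpow g n]" using core_last by blast
  have GA: "lp (cpow g n) \<in> GammaAll X" "cpow g (Suc n) \<in> GammaAll X" "rp (cpow g n) \<in> GammaAll X"
    using k Gamma_GA cs by metis+
  have s1: "rho X (core g (Suc n)) (core g n @ [rp (cpow g n), cpow g (Suc n)])"
    apply (rule ctx[OF rho.gen4[OF a], of "[]" "v @ [rp (cpow g n), cpow g (Suc n)]"])
    using w v GA by (auto simp: core_Suc cs)
  have s2: "rho X (core g n @ [rp (cpow g n), cpow g (Suc n)]) (core g n)"
    apply (rule ctx[OF rho.gen5[OF a], of v' "[]"])
    using w v' GA by (auto simp: cs)
  show ?case using rho.trans[OF rho.trans[OF s1 s2] IH] .
qed

lemma beta_ok: "g1 \<in> GammaAll X \<Longrightarrow> rho X [g1] (beta1 X g1)"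
proof -
  assume "g1 \<in> GammaAll X"
  then obtain h where h: "g1 \<in> Gamma X h" unfolding GammaAll_def by blast
  then have hh: "height X g1 = h" by (rule height_eq)
  define n where "n = h div 2"
  have c: "rho X (core g1 n) [g1]" using core_rho[OF h] n_def by simp
  have cdef: "core g1 n = concat (map (\<lambda>k. [cpow g1 (Suc k), lp (cpow g1 k)]) (rev [0..<n])) @ [g1]
                @ concat (map (\<lambda>k. [rp (cpow g1 k), cpow g1 (Suc k)]) [0..<n])"
    by (simp add: core_def)
  show ?thesis
  proof (cases "g1 = One")
    case True
    have "[One] \<in> words X" using One_GA by (simp add: words_def)
    then show ?thesis unfolding beta1_def using True rho.refl by simp
  next
    case False
    show ?thesis
    proof (cases "even h")
      case True
      then show ?thesis unfolding beta1_def Let_def hh using False cdef[symmetric] n_def rho.sym[OF c] by simp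
    next
      case odd: False
      have hn: "h = 2 * n + 1" using odd n_def by presburger
      have a: "cpow g1 n \<in> Gamma X 1" using cpow_Gamma[OF h, of n] hn by simp
      have GA: "cpow g1 n \<in> GammaAll X" "One \<in> GammaAll X" using Gamma_GA[OF a] One_GA by auto
      have w: "set (core g1 n) \<subseteq> GammaAll X" using rho_words[OF c] by (simp add: words_def)
      obtain v where v: "core g1 n = cpow g1 n # v" using core_hd by blast
      obtain v' where v': "core g1 n = v' @ [cpow g1 n]" using core_last by blast
      have s1: "rho X (One # core g1 n @ [One]) (core g1 n @ [One])"
        apply (rule ctx[OF rho.gen1[OF GA(1)], of "[]" "v @ [One]"])
        using w v GA by auto
      have s2: "rho X (core g1 n @ [One]) (core g1 n)"
        apply (rule ctx[OF rho.gen2[OF GA(1)], of v' "[]"])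
        using w v' GA by auto
      have "rho X [g1] (One # core g1 n @ [One])"
        using rho.sym[OF rho.trans[OF rho.trans[OF s1 s2] c]] .
      then show ?thesis unfolding beta1_def Let_def hh using False odd cdef[symmetric] n_def by simp
    qed
  qed
qed


theorem lemma3p1:
  fixes X :: "'a set" and g g1 :: "'a gam" and i :: nat
  assumes "X \<noteq> {}"
    and "g \<in> Gamma X i" and "2 \<le> i"
    and "g1 \<in> GammaAll X"
  shows
    "(rho X [g] [cp g, g] \<and> rho X [g] [g, cp g] \<and> rho X [g] [g, lp g, g]
        \<and> rho X [g] [g, rp g, g] \<and> rho X [rp g, g, lp g] [rp g, cp g, lp g])
   \<and> (cls X [g, rp g] \<in> idem X \<and> cls X [g, lp g] \<in> idem X
        \<and> cls X [rp g, g] \<in> idem X \<and> cls X [lp g, g] \<in> idem X)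
   \<and> (greenL X (cls X [lp g, g]) (cls X [rp g, g]) \<and> greenL X (cls X [rp g, g]) (cls X [g])
        \<and> greenR X (cls X [g]) (cls X [g, rp g]) \<and> greenR X (cls X [g, rp g]) (cls X [g, lp g]))
   \<and> cls X [g] \<in> sandwich X (cls X [rp g, cp g]) (cls X [cp g, lp g])
   \<and> rho X [g1] (beta1 X g1)"
proof -
  note A = alg[OF assms(2,3)]
  note B = partB[OF assms(2,3)]
  note C = beta_ok[OF assms(4)]
  show ?thesis using A B C by blast
qed

end
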